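(* Consider the following slotted system. There are $N\ge2$ users and slots $t=1,\dots,T$. In each slot the BS schedules one user according to a scheduling algorithm $\pi$. Here $\pi$ may be randomized, and its choice in slot $t$ may depend on the adversary's actions in slots before $t$. An adversary uses a blocking matrix $\sigma\in\{0,1\}^{N\times T}$, where $\sigma_i(t)=0$ means user $i$'s channel is blocked in slot $t$. Feasibility means $\sum_{i,t}(1-\sigma_i(t))\le\alpha T$ and at most one user is blocked per slot, where $0<\alpha<1$. The ages satisfy $a_i(1)=1$ and $a_i(t+1)=1$ if user $i$ is scheduled in slot $t$ and $\sigma_i(t)=1$, and $a_i(t+1)=a_i(t)+1$ otherwise. Let $\Delta^{\pi,\sigma}=\frac1T\sum_{t=1}^T\frac1N\sum_{i=1}^N\mathbb{E}[a_i(t)]$ and $\Delta^*(T)=\sup_{\sigma}\inf_{\pi}\Delta^{\pi,\sigma}$, where $\sigma$ ranges over feasible blocking matrices. Let "unif" denote the algorithm that in each slot independently schedules a uniformly random user. Then, with $T\to\infty$ over values with $\alpha T\in\mathbb{Z}$, $$\limsup_{T\to\infty}\frac{\sup_{\sigma}\Delta^{\mathrm{unif},\sigma}}{\Delta^*(T)}\le\frac{1}{\alpha^2}.$$ That is, uniform scheduling is asymptotically $\frac1{\alpha^2}$-optimal.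
   Context: The expectation is over the scheduling randomness. *)

theory Defs
  imports "HOL-Probability.Probability"
begin

text \<open>A blocking matrix is sigma :: nat => nat => bool,
  where sigma i t = True means sigma_i(t) = 1 (channel of user i open in slot t) and
  sigma i t = False means sigma_i(t) = 0 (blocked).\<close>

definition feasible :: "nat \<Rightarrow> real \<Rightarrow> nat \<Rightarrow> (nat \<Rightarrow> nat \<Rightarrow> bool) set" where
  "feasible N \<alpha> T = {\<sigma>.
      real (card {(i, t). i \<in> {1..N} \<and> t \<in> {1..T} \<and> \<not> \<sigma> i t}) \<le> \<alpha> * real T
    \<and> (\<forall>t\<in>{1..T}. card {i. i \<in> {1..N} \<and> \<not> \<sigma> i t} \<le> 1)}"

text \<open>A (randomized, adaptive) scheduling policy: in slot t, given the blocking matrix and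
  the list h of its own previous choices (h ! (s-1) = user scheduled in slot s, s < t),
  it outputs a distribution over users.\<close>

type_synonym policy = "nat \<Rightarrow> (nat \<Rightarrow> nat \<Rightarrow> bool) \<Rightarrow> nat list \<Rightarrow> nat pmf"

definition policies :: "nat \<Rightarrow> policy set" where
  "policies N = {\<pi>.
      (\<forall>t \<sigma> h. set_pmf (\<pi> t \<sigma> h) \<subseteq> {1..N})
    \<and> (\<forall>t \<sigma> \<sigma>' h. (\<forall>i s. s < t \<longrightarrow> \<sigma> i s = \<sigma>' i s) \<longrightarrow> \<pi> t \<sigma> h = \<pi> t \<sigma>' h)}"

primrec sched :: "policy \<Rightarrow> (nat \<Rightarrow> nat \<Rightarrow> bool) \<Rightarrow> nat \<Rightarrow> nat list pmf" where
  "sched \<pi> \<sigma> 0 = return_pmf []"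
| "sched \<pi> \<sigma> (Suc k) =
     bind_pmf (sched \<pi> \<sigma> k) (\<lambda>h. map_pmf (\<lambda>u. h @ [u]) (\<pi> (Suc k) \<sigma> h))"

text \<open>Age a_i(t) (t \<ge> 1) for a schedule s (s t = user scheduled in slot t):
  a_i(1) = 1, a_i(t+1) = 1 if s t = i and sigma_i(t) = 1, else a_i(t) + 1.
  The value at t = 0 is a dummy.\<close>
primrec age :: "(nat \<Rightarrow> nat \<Rightarrow> bool) \<Rightarrow> (nat \<Rightarrow> nat) \<Rightarrow> nat \<Rightarrow> nat \<Rightarrow> nat" where
  "age \<sigma> s i 0 = 1"
| "age \<sigma> s i (Suc t) =
     (if t = 0 then 1 else if s t = i \<and> \<sigma> i t then 1 else age \<sigma> s i t + 1)"

definition avg_age :: "nat \<Rightarrow> nat \<Rightarrow> policy \<Rightarrow> (nat \<Rightarrow> nat \<Rightarrow> bool) \<Rightarrow> real" where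
  "avg_age N T \<pi> \<sigma> = (1 / real T) * (\<Sum>t = 1..T. (1 / real N) * (\<Sum>i = 1..N.
      measure_pmf.expectation (sched \<pi> \<sigma> (t - 1))
        (\<lambda>h. real (age \<sigma> (\<lambda>s. h ! (s - 1)) i t))))"

definition opt_age :: "nat \<Rightarrow> real \<Rightarrow> nat \<Rightarrow> real" where
  "opt_age N \<alpha> T = (SUP \<sigma> \<in> feasible N \<alpha> T. INF \<pi> \<in> policies N. avg_age N T \<pi> \<sigma>)"

definition unif :: "nat \<Rightarrow> policy" where
  "unif N = (\<lambda>t \<sigma> h. pmf_of_set {1..N})"

end

theory Submission imports Defs begin

lemma int_bind_pmf:
  fixes f :: "_ \<Rightarrow> real"
  assumes "\<And>x. \<bar>f x\<bar> \<le> B"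
  shows "measure_pmf.expectation (bind_pmf M N) f = measure_pmf.expectation M (\<lambda>x. measure_pmf.expectation (N x) f)"
  unfolding measure_pmf_bind
  apply (rule integral_bind[where K="count_space UNIV" and B=B and B'=1])
  using assms by (auto simp: measurable_measure_pmf measure_pmf.emeasure_space_1 space_subprob_algebra subprob_space_measure_pmf intro: prob_space.finite_measure measure_pmf.prob_space_axioms)

lemma age_cong: "(\<And>j. 1 \<le> j \<Longrightarrow> j < t \<Longrightarrow> s j = s' j) \<Longrightarrow> age \<sigma> s i t = age \<sigma> s' i t"
  by (induction t) auto

lemma age_le: "age \<sigma> s i t \<le> Suc t"
  by (induction t) auto

lemma age_ge: "1 \<le> age \<sigma> s i t"
  by (induction t) auto

lemma set_sched_len: "h \<in> set_pmf (sched \<pi> \<sigma> k) \<Longrightarrow> length h = k"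
  by (induction k arbitrary: h) auto

lemma finite_sched_unif: "N \<ge> 1 \<Longrightarrow> finite (set_pmf (sched (unif N) \<sigma> k))"
  by (induction k) (auto simp: unif_def)

definition Eu :: "nat \<Rightarrow> (nat \<Rightarrow> nat \<Rightarrow> bool) \<Rightarrow> nat \<Rightarrow> nat \<Rightarrow> real" where
  "Eu N \<sigma> i k = measure_pmf.expectation (sched (unif N) \<sigma> k) (\<lambda>h. real (age \<sigma> (\<lambda>s. h ! (s - 1)) i (Suc k)))"

lemma age_snoc:
  assumes "length h = k"
  shows "age \<sigma> (\<lambda>s. (h @ [u]) ! (s - 1)) i (Suc (Suc k)) =
         (if u = i \<and> \<sigma> i (Suc k) then 1 else age \<sigma> (\<lambda>s. h ! (s - 1)) i (Suc k) + 1)"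
proof -
  have "age \<sigma> (\<lambda>s. (h @ [u]) ! (s - 1)) i (Suc k) = age \<sigma> (\<lambda>s. h ! (s - 1)) i (Suc k)"
    by (rule age_cong) (use assms in \<open>auto simp: nth_append\<close>)
  then show ?thesis using assms by (simp add: nth_append)
qed

declare age.simps[simp del]

lemma Eu_step:
  assumes N: "N \<ge> 1" and i: "i \<in> {1..N}"
  shows "Eu N \<sigma> i (Suc k) = (if \<sigma> i (Suc k) then 1 + (1 - 1 / real N) * Eu N \<sigma> i k else Eu N \<sigma> i k + 1)"
proof -
  let ?G = "\<lambda>h. real (age \<sigma> (\<lambda>s. h ! (s - 1)) i (Suc k))"
  let ?F = "\<lambda>h. real (age \<sigma> (\<lambda>s. h ! (s - 1)) i (Suc (Suc k)))"
  let ?M = "sched (unif N) \<sigma> k"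
  have fin: "finite (set_pmf ?M)" using finite_sched_unif N by blast
  have "Eu N \<sigma> i (Suc k) = measure_pmf.expectation ?M
      (\<lambda>h. measure_pmf.expectation (map_pmf (\<lambda>u. h @ [u]) (pmf_of_set {1..N})) ?F)"
    unfolding Eu_def sched.simps unif_def
  proof (rule int_bind_pmf[where B="real (Suc (Suc (Suc k)))"])
    fix h :: "nat list"
    have "age \<sigma> (\<lambda>s. h ! (s - 1)) i (Suc (Suc k)) \<le> Suc (Suc (Suc k))" using age_le[of \<sigma> "\<lambda>s. h ! (s - 1)" i "Suc (Suc k)"] by linarith
    then show "\<bar>?F h\<bar> \<le> real (Suc (Suc (Suc k)))" by simp
  qed
  also have "\<dots> = measure_pmf.expectation ?M
      (\<lambda>h. (\<Sum>u\<in>{1..N}. ?F (h @ [u])) / real N)"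
    using N by (simp add: integral_pmf_of_set)
  also have "\<dots> = measure_pmf.expectation ?M
      (\<lambda>h. if \<sigma> i (Suc k) then (1 + (real N - 1) * (?G h + 1)) / real N else ?G h + 1)"
  proof (rule integral_cong_AE)
    show "AE h in ?M. (\<Sum>u\<in>{1..N}. ?F (h @ [u])) / real N =
      (if \<sigma> i (Suc k) then (1 + (real N - 1) * (?G h + 1)) / real N else ?G h + 1)"
    proof (rule AE_pmfI)
      fix h assume "h \<in> set_pmf ?M"
      then have len: "length h = k" by (rule set_sched_len)
      have eq: "\<And>u. ?F (h @ [u]) = (if u = i \<and> \<sigma> i (Suc k) then 1 else ?G h + 1)"
        using age_snoc[OF len] by simp
      show "(\<Sum>u\<in>{1..N}. ?F (h @ [u])) / real N =
        (if \<sigma> i (Suc k) then (1 + (real N - 1) * (?G h + 1)) / real N else ?G h + 1)"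
      proof (cases "\<sigma> i (Suc k)")
        case True
        have "(\<Sum>u\<in>{1..N}. ?F (h @ [u])) = ?F (h @ [i]) + (\<Sum>u\<in>{1..N} - {i}. ?F (h @ [u]))"
          using i by (simp add: sum.remove)
        also have "(\<Sum>u\<in>{1..N} - {i}. ?F (h @ [u])) = (\<Sum>u\<in>{1..N} - {i}. ?G h + 1)"
        proof (rule sum.cong)
          fix u assume u: "u \<in> {1..N} - {i}"
          show "?F (h @ [u]) = ?G h + 1" using u by (subst eq) simp
        qed simp
        also have "\<dots> = (real N - 1) * (?G h + 1)"
          using i N by (simp add: of_nat_diff)
        finally show ?thesis using True eq by simp
      next
        case False
        then show ?thesis using eq N by simp
      qed
    qed
  qed simp_all
  also have "\<dots> = (if \<sigma> i (Suc k) then 1 + (1 - 1 / real N) * Eu N \<sigma> i k else Eu N \<sigma> i k + 1)"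
  proof (cases "\<sigma> i (Suc k)")
    case True
    have "(\<lambda>h. (1 + (real N - 1) * (?G h + 1)) / real N) = (\<lambda>h. 1 + (1 - 1 / real N) * ?G h)"
      using N by (auto simp: field_simps)
    moreover have "measure_pmf.expectation ?M (\<lambda>h. 1 + (1 - 1 / real N) * ?G h)
       = measure_pmf.expectation ?M (\<lambda>h. 1) + measure_pmf.expectation ?M (\<lambda>h. (1 - 1 / real N) * ?G h)"
      by (rule Bochner_Integration.integral_add) (simp_all add: integrable_measure_pmf_finite[OF fin])
    ultimately show ?thesis using True
      by (simp add: Eu_def integral_mult_right_zero)
  next
    case False
    have "measure_pmf.expectation ?M (\<lambda>h. ?G h + 1)
       = measure_pmf.expectation ?M ?G + measure_pmf.expectation ?M (\<lambda>h. 1)"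
      by (rule Bochner_Integration.integral_add) (simp_all add: integrable_measure_pmf_finite[OF fin])
    then show ?thesis using False by (simp add: Eu_def)
  qed
  finally show ?thesis .
qed

lemma Eu_bound:
  assumes N: "N \<ge> 1" and i: "i \<in> {1..N}"
  shows "Eu N \<sigma> i k \<le> real (card {s \<in> {1..k}. \<not> \<sigma> i s}) + real N"
proof (induction k)
  case 0
  have "Eu N \<sigma> i 0 = 1" by (simp add: Eu_def age.simps)
  then show ?case using N by simp
next
  case (Suc k)
  have c: "{s \<in> {1..Suc k}. \<not> \<sigma> i s} = {s \<in> {1..k}. \<not> \<sigma> i s} \<union> (if \<sigma> i (Suc k) then {} else {Suc k})"
    using le_Suc_eq by auto
  have cc: "real (card {s \<in> {1..Suc k}. \<not> \<sigma> i s}) = real (card {s \<in> {1..k}. \<not> \<sigma> i s}) + (if \<sigma> i (Suc k) then 0 else 1)"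
    unfolding c by (auto simp: card_Un_disjoint)
  have E0: "0 \<le> Eu N \<sigma> i k" unfolding Eu_def by (rule Bochner_Integration.integral_nonneg) simp
  show ?case
  proof (cases "\<sigma> i (Suc k)")
    case True
    have "1 + (1 - 1 / real N) * Eu N \<sigma> i k \<le> 1 + (1 - 1 / real N) * (real (card {s \<in> {1..k}. \<not> \<sigma> i s}) + real N)"
      using Suc.IH N by (intro add_left_mono mult_left_mono) (auto simp: field_simps)
    also have "\<dots> \<le> real (card {s \<in> {1..k}. \<not> \<sigma> i s}) + real N"
      using N by (simp add: field_simps)
    finally show ?thesis using True Eu_step[OF N i] cc by simp
  next
    case False
    then show ?thesis using Eu_step[OF N i] cc Suc.IH by simp
  qed
qed

lemma swap_count:
  assumes "finite I" "finite S"
  shows "(\<Sum>i\<in>I. card {s \<in> S. P i s}) = (\<Sum>s\<in>S. card {i \<in> I. P i s})"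
proof -
  have "(\<Sum>i\<in>I. card {s \<in> S. P i s}) = (\<Sum>i\<in>I. \<Sum>s\<in>S. if P i s then 1 else 0)"
    using assms by (simp add: sum.inter_filter[symmetric])
  also have "\<dots> = (\<Sum>s\<in>S. \<Sum>i\<in>I. if P i s then 1 else 0)" by (rule sum.swap)
  also have "\<dots> = (\<Sum>s\<in>S. card {i \<in> I. P i s})"
    using assms by (simp add: sum.inter_filter[symmetric])
  finally show ?thesis .
qed

lemma blocked_le:
  assumes "\<sigma> \<in> feasible N \<alpha> T" "k \<le> T"
  shows "(\<Sum>i=1..N. card {s \<in> {1..k}. \<not> \<sigma> i s}) \<le> k"
proof -
  have "(\<Sum>i=1..N. card {s \<in> {1..k}. \<not> \<sigma> i s}) = (\<Sum>s=1..k. card {i \<in> {1..N}. \<not> \<sigma> i s})"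
    by (rule swap_count) auto
  also have "\<dots> \<le> (\<Sum>s=1..k. 1)"
    using assms by (intro sum_mono) (auto simp: feasible_def)
  finally show ?thesis by simp
qed

lemma sum_tm1: "(\<Sum>t=1..T. real (t - 1)) \<le> real T ^ 2 / 2"
proof (induction T)
  case 0 then show ?case by simp
next
  case (Suc T)
  have "(\<Sum>t=1..Suc T. real (t - 1)) = (\<Sum>t=1..T. real (t - 1)) + real T" by simp
  also have "\<dots> \<le> real T ^ 2 / 2 + real T" using Suc by simp
  also have "\<dots> \<le> real (Suc T) ^ 2 / 2" by (simp add: power2_eq_square field_simps)
  finally show ?case .
qed

lemma sum_t: "(\<Sum>t=1..n. real t) = real n * (real n + 1) / 2"
  by (induction n) (simp_all add: field_simps)

lemma avg_unif:
  assumes N: "N \<ge> 1" and T: "T \<ge> 1" and f: "\<sigma> \<in> feasible N \<alpha> T"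
  shows "avg_age N T (unif N) \<sigma> \<le> real T / (2 * real N) + real N"
proof -
  have "avg_age N T (unif N) \<sigma> = (1 / real T) * (\<Sum>t = 1..T. (1 / real N) * (\<Sum>i = 1..N. Eu N \<sigma> i (t - 1)))"
    unfolding avg_age_def Eu_def
    by (intro arg_cong2[where f="(*)"] refl sum.cong) (auto simp: Suc_diff_1)
  also have "\<dots> \<le> (1 / real T) * (\<Sum>t = 1..T. (1 / real N) * (real (t - 1) + real N * real N))"
  proof (intro mult_left_mono sum_mono)
    fix t assume t: "t \<in> {1..T}"
    have "(\<Sum>i = 1..N. Eu N \<sigma> i (t - 1)) \<le> (\<Sum>i = 1..N. real (card {s \<in> {1..t-1}. \<not> \<sigma> i s}) + real N)"
      using Eu_bound[OF N] by (intro sum_mono) auto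
    also have "\<dots> = real (\<Sum>i = 1..N. card {s \<in> {1..t-1}. \<not> \<sigma> i s}) + real N * real N"
      by (simp add: sum.distrib)
    also have "\<dots> \<le> real (t - 1) + real N * real N"
    proof -
      have h: "(\<Sum>i = 1..N. card {s \<in> {1..t-1}. \<not> \<sigma> i s}) \<le> t - 1"
        by (rule blocked_le[OF f]) (use t in auto)
      show ?thesis using h by (simp only: of_nat_le_iff add_le_cancel_right)
    qed
    finally show "(\<Sum>i = 1..N. Eu N \<sigma> i (t - 1)) \<le> real (t - 1) + real N * real N" .
  qed simp_all
  also have "\<dots> = (1 / (real T * real N)) * (\<Sum>t = 1..T. real (t - 1)) + real N"
  proof -
    have "(\<Sum>t = 1..T. (1 / real N) * (real (t - 1) + real N * real N))
        = (\<Sum>t = 1..T. real (t - 1) / real N + real N)"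
      using N by (intro sum.cong refl) (simp add: field_simps)
    also have "\<dots> = (\<Sum>t = 1..T. real (t - 1)) / real N + real T * real N"
      by (simp add: sum.distrib sum_divide_distrib)
    finally show ?thesis using N T by (simp add: field_simps)
  qed
  also have "\<dots> \<le> (1 / (real T * real N)) * (real T ^ 2 / 2) + real N"
    using sum_tm1[of T] by (intro add_right_mono mult_left_mono) auto
  also have "\<dots> = real T / (2 * real N) + real N"
    using N T by (simp add: power2_eq_square field_simps)
  finally show ?thesis .
qed

lemma avg_nonneg: "0 \<le> avg_age N T \<pi> \<sigma>"
  unfolding avg_age_def
  by (intro mult_nonneg_nonneg sum_nonneg Bochner_Integration.integral_nonneg) auto

definition sig0 :: "nat \<Rightarrow> nat \<Rightarrow> nat \<Rightarrow> bool" where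
  "sig0 m = (\<lambda>i t. \<not> (i = 1 \<and> t \<le> m))"

lemma age_sig0: "1 \<le> t \<Longrightarrow> t \<le> Suc m \<Longrightarrow> age (sig0 m) s 1 t = t"
proof (induction t)
  case 0 then show ?case by simp
next
  case (Suc t)
  then show ?case by (cases "t = 0") (auto simp: age.simps sig0_def)
qed

lemma sig0_feasible:
  assumes N: "N \<ge> 1" and m: "real m = \<alpha> * real T" "m \<le> T"
  shows "sig0 m \<in> feasible N \<alpha> T"
proof -
  have "{(i, t). i \<in> {1..N} \<and> t \<in> {1..T} \<and> \<not> sig0 m i t} = {1} \<times> {1..m}"
    using N m by (auto simp: sig0_def)
  moreover have "\<And>t. card {i. i \<in> {1..N} \<and> \<not> sig0 m i t} \<le> 1"
  proof -
    fix t
    have "{i. i \<in> {1..N} \<and> \<not> sig0 m i t} \<subseteq> {1}" by (auto simp: sig0_def)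
    then show "card {i. i \<in> {1..N} \<and> \<not> sig0 m i t} \<le> 1"
      using card_mono[of "{1::nat}"] by fastforce
  qed
  ultimately show ?thesis using m by (simp add: feasible_def)
qed

lemma avg_sig0:
  assumes N: "N \<ge> 1" and mT: "m < T"
  shows "avg_age N T \<pi> (sig0 m) \<ge> real m ^ 2 / (2 * real T * real N)"
proof -
  let ?E = "\<lambda>t i. measure_pmf.expectation (sched \<pi> (sig0 m) (t - 1))
        (\<lambda>h. real (age (sig0 m) (\<lambda>s. h ! (s - 1)) i t))"
  have E1: "?E t 1 = real t" if "t \<in> {1..Suc m}" for t
  proof -
    have "(\<lambda>h. real (age (sig0 m) (\<lambda>s. h ! (s - 1)) 1 t)) = (\<lambda>h. real t)"
      by (intro ext arg_cong[where f=real] age_sig0) (use that in auto)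
    then show ?thesis by simp
  qed
  have Enn: "0 \<le> ?E t i" for t i by (rule Bochner_Integration.integral_nonneg) simp
  have "real m ^ 2 / 2 \<le> (\<Sum>t=1..Suc m. real t)"
    unfolding sum_t by (simp add: power2_eq_square field_simps)
  also have "\<dots> = (\<Sum>t=1..Suc m. ?E t 1)" 
  proof (rule sum.cong)
    fix t assume "t \<in> {1..Suc m}"
    then show "real t = ?E t 1" by (rule E1[symmetric])
  qed simp
  also have "\<dots> \<le> (\<Sum>t=1..T. ?E t 1)"
    using mT by (intro sum_mono2) (auto simp: Enn)
  also have "\<dots> \<le> (\<Sum>t=1..T. \<Sum>i=1..N. ?E t i)"
    using N by (intro sum_mono member_le_sum) (auto simp: Enn)
  finally have *: "real m ^ 2 / 2 \<le> (\<Sum>t=1..T. \<Sum>i=1..N. ?E t i)" .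
  have "avg_age N T \<pi> (sig0 m) = (1 / (real T * real N)) * (\<Sum>t=1..T. \<Sum>i=1..N. ?E t i)"
    unfolding avg_age_def by (simp add: sum_distrib_left)
  also have "\<dots> \<ge> (1 / (real T * real N)) * (real m ^ 2 / 2)"
    using * by (intro mult_left_mono) auto
  finally show ?thesis by (simp add: field_simps)
qed

lemma unif_policy: "N \<ge> 1 \<Longrightarrow> unif N \<in> policies N"
  by (simp add: policies_def unif_def)

lemma ratio_bound:
  fixes N T :: nat and \<alpha> :: real
  assumes N: "N \<ge> 1" and a0: "0 < \<alpha>" and a1: "\<alpha> < 1" and T: "T \<ge> 1" and z: "\<alpha> * real T \<in> \<int>"
  shows "(SUP \<sigma> \<in> feasible N \<alpha> T. avg_age N T (unif N) \<sigma>) / opt_age N \<alpha> T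
         \<le> 1 / \<alpha>\<^sup>2 + 2 * (real N)\<^sup>2 / (\<alpha>\<^sup>2 * real T)"
proof -
  obtain zz where zz: "\<alpha> * real T = of_int zz" using z by (auto elim: Ints_cases)
  have "0 \<le> \<alpha> * real T" using a0 by simp
  then have zz0: "0 \<le> zz" using zz by simp
  define m where "m = nat zz"
  have m: "real m = \<alpha> * real T" using zz zz0 by (simp add: m_def)
  have "\<alpha> * real T < real T" using a1 T by simp
  then have mT: "m < T" using m by linarith
  have feas: "sig0 m \<in> feasible N \<alpha> T" using sig0_feasible[OF N m] mT by simp
  define BU where "BU = real T / (2 * real N) + real N"
  have BU0: "0 \<le> BU" unfolding BU_def by simp
  have S: "(SUP \<sigma> \<in> feasible N \<alpha> T. avg_age N T (unif N) \<sigma>) \<le> BU"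
    unfolding BU_def by (rule cSUP_least) (use feas avg_unif[OF N T] in auto)
  have bb: "bdd_below ((\<lambda>\<pi>. avg_age N T \<pi> \<sigma>) ` policies N)" for \<sigma>
    by (rule bdd_belowI2[where m=0]) (rule avg_nonneg)
  have ba: "bdd_above ((\<lambda>\<sigma>. INF \<pi> \<in> policies N. avg_age N T \<pi> \<sigma>) ` feasible N \<alpha> T)"
  proof (rule bdd_aboveI2[where M=BU])
    fix \<sigma> assume f: "\<sigma> \<in> feasible N \<alpha> T"
    have "(INF \<pi> \<in> policies N. avg_age N T \<pi> \<sigma>) \<le> avg_age N T (unif N) \<sigma>"
      by (rule cINF_lower[OF bb unif_policy[OF N]])
    also have "\<dots> \<le> BU" unfolding BU_def by (rule avg_unif[OF N T f])
    finally show "(INF \<pi> \<in> policies N. avg_age N T \<pi> \<sigma>) \<le> BU" .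
  qed
  define L where "L = real m ^ 2 / (2 * real T * real N)"
  have "L \<le> (INF \<pi> \<in> policies N. avg_age N T \<pi> (sig0 m))"
    unfolding L_def by (rule cINF_greatest) (use unif_policy[OF N] avg_sig0[OF N mT] in auto)
  also have "\<dots> \<le> opt_age N \<alpha> T"
    unfolding opt_age_def by (rule cSUP_upper[OF feas ba])
  finally have Lopt: "L \<le> opt_age N \<alpha> T" .
  have Leq: "L = \<alpha>\<^sup>2 * real T / (2 * real N)"
    unfolding L_def m using T N by (simp add: power2_eq_square field_simps)
  have L0: "0 < L" unfolding Leq using a0 T N by simp
  have "(SUP \<sigma> \<in> feasible N \<alpha> T. avg_age N T (unif N) \<sigma>) / opt_age N \<alpha> T \<le> BU / L"
    by (rule frac_le[OF BU0 S L0 Lopt])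
  also have "BU / L = 1 / \<alpha>\<^sup>2 + 2 * (real N)\<^sup>2 / (\<alpha>\<^sup>2 * real T)"
    unfolding BU_def Leq using a0 T N by (simp add: power2_eq_square field_simps)
  finally show ?thesis .
qed

theorem theorem3:
  fixes N :: nat and \<alpha> :: real
  assumes "N \<ge> 2" and "0 < \<alpha>" and "\<alpha> < 1"
  shows "Limsup (inf sequentially (principal {T. \<alpha> * real T \<in> \<int>}))
           (\<lambda>T. ereal ((SUP \<sigma> \<in> feasible N \<alpha> T. avg_age N T (unif N) \<sigma>) / opt_age N \<alpha> T))
         \<le> ereal (1 / \<alpha>\<^sup>2)"
proof (rule ereal_le_epsilon2)
  fix e :: real assume e: "0 < e"
  have N: "N \<ge> 1" using assms by simp
  define T0 where "T0 = nat \<lceil>2 * (real N)\<^sup>2 / (\<alpha>\<^sup>2 * e)\<rceil> + 1"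
  have ev: "eventually (\<lambda>T. T \<in> {T. \<alpha> * real T \<in> \<int>} \<longrightarrow>
      ereal ((SUP \<sigma> \<in> feasible N \<alpha> T. avg_age N T (unif N) \<sigma>) / opt_age N \<alpha> T) \<le> ereal (1 / \<alpha>\<^sup>2 + e)) sequentially"
    unfolding eventually_sequentially
  proof (intro exI allI impI)
    fix T assume T: "T0 \<le> T" and z: "T \<in> {T. \<alpha> * real T \<in> \<int>}"
    have T1: "T \<ge> 1" using T unfolding T0_def by simp
    have "2 * (real N)\<^sup>2 / (\<alpha>\<^sup>2 * e) \<le> real T"
      using T unfolding T0_def by linarith
    then have "2 * (real N)\<^sup>2 \<le> e * (\<alpha>\<^sup>2 * real T)"
      using e assms by (simp add: field_simps)
    then have "2 * (real N)\<^sup>2 / (\<alpha>\<^sup>2 * real T) \<le> e"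
      using e assms T1 by (simp add: field_simps)
    then show "ereal ((SUP \<sigma> \<in> feasible N \<alpha> T. avg_age N T (unif N) \<sigma>) / opt_age N \<alpha> T) \<le> ereal (1 / \<alpha>\<^sup>2 + e)"
      using ratio_bound[OF N assms(2,3) T1] z by simp
  qed
  have "Limsup (inf sequentially (principal {T. \<alpha> * real T \<in> \<int>}))
           (\<lambda>T. ereal ((SUP \<sigma> \<in> feasible N \<alpha> T. avg_age N T (unif N) \<sigma>) / opt_age N \<alpha> T))
         \<le> ereal (1 / \<alpha>\<^sup>2 + e)"
    by (rule Limsup_bounded) (use ev in \<open>simp add: eventually_inf_principal\<close>)
  then show "Limsup (inf sequentially (principal {T. \<alpha> * real T \<in> \<int>}))
           (\<lambda>T. ereal ((SUP \<sigma> \<in> feasible N \<alpha> T. avg_age N T (unif N) \<sigma>) / opt_age N \<alpha> T))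
         \<le> ereal (1 / \<alpha>\<^sup>2) + ereal e" by simp
qed

end
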